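(* Fix a strategy profile $g=(g^i,g^{-i})$ and a player $i$, and define the strategy $s^i$ of player $i$ by $s^i_t(a^i_t\mid a_{1:t-1},x^i_t)=P^g(A^i_t=a^i_t\mid A_{1:t-1}=a_{1:t-1},X^i_t=x^i_t)$ whenever the conditioning event has positive probability (arbitrary otherwise); this $s^i$ depends on $g$ only through $g^i$. Then for all $t\in\mathcal T$, $x^i_t,x^i_{t+1}\in\mathcal X^i$ and $a_{1:t}\in\mathcal A^t$, $$P^{s^ig^{-i}}(X^i_t=x^i_t,X^i_{t+1}=x^i_{t+1},A_{1:t}=a_{1:t})=P^{g}(X^i_t=x^i_t,X^i_{t+1}=x^i_{t+1},A_{1:t}=a_{1:t}).$$
   Context: Model: players $\mathcal N=\{1,\dots,N\}$, horizon $\mathcal T=\{1,\dots,T\}$, finite type sets $\mathcal X^i$ and action sets $\mathcal A^i$, $\mathcal X=\times_i\mathcal X^i$, $\mathcal A=\times_i\mathcal A^i$. Types evolve as $P(x_1)=\prod_iQ^i_1(x^i_1)$ and $P(x_{t+1}\mid x_{1:t},a_{1:t})=\prod_iQ^i_{t+1}(x^i_{t+1}\mid x^i_t,a_t)$ for known kernels (each may depend on the full action profile). Player $i$ privately observes its own types and all actions are public; a strategy $g^i$ specifies $g^i_t(\cdot\mid a_{1:t-1},x^i_{1:t})\in\mathcal P(\mathcal A^i)$, and a strategy $s^i$ of the restricted form specifies $s^i_t(\cdot\mid a_{1:t-1},x^i_t)$; players randomize independently given their information. $P^g$ denotes probability under profile $g$; $-i$ denotes all players except $i$. *)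

theory Defs
  imports Complex_Main "HOL-Library.FuncSet"
begin

(* Players are 1..N, times are 1..T.
   Xs j / As j are the type / action sets of player j.
   A type profile is an element of profiles N Xs (a function on players, extensional);
   an action profile is an element of profiles N As.
   Histories are lists: a_{1:k} is a list of k action profiles (a_k = as!(k-1)),
   x_{1:k} is a list of k type profiles (x_k = xs!(k-1)).
   Q1 j x          = Q^j_1(x)
   Q j t x a y     = Q^j_t(y | x, a)   (a is the full action profile)
   g j t h xh a    = g^j_t(a | a_{1:t-1} = h, x^j_{1:t} = xh)
   s t h x a       = s^i_t(a | a_{1:t-1} = h, x^i_t = x)  (restricted strategy) *)

definition profiles :: "nat \<Rightarrow> (nat \<Rightarrow> 'b set) \<Rightarrow> (nat \<Rightarrow> 'b) set" where
  "profiles N S = PiE {1..N} S"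

definition traj :: "nat \<Rightarrow> nat \<Rightarrow> (nat \<Rightarrow> 'b set) \<Rightarrow> (nat \<Rightarrow> 'b) list set" where
  "traj N n S = {xs. length xs = n \<and> set xs \<subseteq> profiles N S}"

(* P^g(X_{1:n} = xs, A_{1:n-1} = as), for length xs = n \<ge> 1, length as = n-1 *)
definition pr_x :: "nat \<Rightarrow> (nat \<Rightarrow> 'x \<Rightarrow> real) \<Rightarrow> (nat \<Rightarrow> nat \<Rightarrow> 'x \<Rightarrow> (nat \<Rightarrow> 'a) \<Rightarrow> 'x \<Rightarrow> real)
   \<Rightarrow> (nat \<Rightarrow> nat \<Rightarrow> (nat \<Rightarrow> 'a) list \<Rightarrow> 'x list \<Rightarrow> 'a \<Rightarrow> real)
   \<Rightarrow> nat \<Rightarrow> (nat \<Rightarrow> 'x) list \<Rightarrow> (nat \<Rightarrow> 'a) list \<Rightarrow> real" where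
  "pr_x N Q1 Q g n xs as =
     (\<Prod>j\<in>{1..N}. Q1 j ((xs ! 0) j)) *
     (\<Prod>k\<in>{1..<n}.
        (\<Prod>j\<in>{1..N}. g j k (take (k - 1) as) (map (\<lambda>x. x j) (take k xs)) ((as ! (k - 1)) j)) *
        (\<Prod>j\<in>{1..N}. Q j (k + 1) ((xs ! (k - 1)) j) (as ! (k - 1)) ((xs ! k) j)))"

(* P^g(X_{1:t} = xs, A_{1:t} = as), for length xs = t \<ge> 1, length as = t *)
definition pr_xa :: "nat \<Rightarrow> (nat \<Rightarrow> 'x \<Rightarrow> real) \<Rightarrow> (nat \<Rightarrow> nat \<Rightarrow> 'x \<Rightarrow> (nat \<Rightarrow> 'a) \<Rightarrow> 'x \<Rightarrow> real)
   \<Rightarrow> (nat \<Rightarrow> nat \<Rightarrow> (nat \<Rightarrow> 'a) list \<Rightarrow> 'x list \<Rightarrow> 'a \<Rightarrow> real)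
   \<Rightarrow> nat \<Rightarrow> (nat \<Rightarrow> 'x) list \<Rightarrow> (nat \<Rightarrow> 'a) list \<Rightarrow> real" where
  "pr_xa N Q1 Q g t xs as =
     pr_x N Q1 Q g t xs (take (t - 1) as) *
     (\<Prod>j\<in>{1..N}. g j t (take (t - 1) as) (map (\<lambda>x. x j) xs) ((as ! (t - 1)) j))"

(* P^g(X^i_t = x, X^i_{t+1} = y, A_{1:t} = as) *)
definition prob_next :: "nat \<Rightarrow> (nat \<Rightarrow> 'x set) \<Rightarrow> (nat \<Rightarrow> 'x \<Rightarrow> real) \<Rightarrow> (nat \<Rightarrow> nat \<Rightarrow> 'x \<Rightarrow> (nat \<Rightarrow> 'a) \<Rightarrow> 'x \<Rightarrow> real)
   \<Rightarrow> (nat \<Rightarrow> nat \<Rightarrow> (nat \<Rightarrow> 'a) list \<Rightarrow> 'x list \<Rightarrow> 'a \<Rightarrow> real)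
   \<Rightarrow> nat \<Rightarrow> nat \<Rightarrow> 'x \<Rightarrow> 'x \<Rightarrow> (nat \<Rightarrow> 'a) list \<Rightarrow> real" where
  "prob_next N Xs Q1 Q g i t x y as =
     (\<Sum>xs\<in>{xs \<in> traj N (t + 1) Xs. (xs ! (t - 1)) i = x \<and> (xs ! t) i = y}. pr_x N Q1 Q g (t + 1) xs as)"

(* P^g(A^i_t = a, A_{1:t-1} = h, X^i_t = x) *)
definition cond_num :: "nat \<Rightarrow> (nat \<Rightarrow> 'x set) \<Rightarrow> (nat \<Rightarrow> 'a set) \<Rightarrow> (nat \<Rightarrow> 'x \<Rightarrow> real) \<Rightarrow> (nat \<Rightarrow> nat \<Rightarrow> 'x \<Rightarrow> (nat \<Rightarrow> 'a) \<Rightarrow> 'x \<Rightarrow> real)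
   \<Rightarrow> (nat \<Rightarrow> nat \<Rightarrow> (nat \<Rightarrow> 'a) list \<Rightarrow> 'x list \<Rightarrow> 'a \<Rightarrow> real)
   \<Rightarrow> nat \<Rightarrow> nat \<Rightarrow> (nat \<Rightarrow> 'a) list \<Rightarrow> 'x \<Rightarrow> 'a \<Rightarrow> real" where
  "cond_num N Xs As Q1 Q g i t h x a =
     (\<Sum>xs\<in>{xs \<in> traj N t Xs. (xs ! (t - 1)) i = x}.
        \<Sum>ap\<in>{ap \<in> profiles N As. ap i = a}. pr_xa N Q1 Q g t xs (h @ [ap]))"

(* P^g(A_{1:t-1} = h, X^i_t = x) *)
definition cond_den :: "nat \<Rightarrow> (nat \<Rightarrow> 'x set) \<Rightarrow> (nat \<Rightarrow> 'x \<Rightarrow> real) \<Rightarrow> (nat \<Rightarrow> nat \<Rightarrow> 'x \<Rightarrow> (nat \<Rightarrow> 'a) \<Rightarrow> 'x \<Rightarrow> real)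
   \<Rightarrow> (nat \<Rightarrow> nat \<Rightarrow> (nat \<Rightarrow> 'a) list \<Rightarrow> 'x list \<Rightarrow> 'a \<Rightarrow> real)
   \<Rightarrow> nat \<Rightarrow> nat \<Rightarrow> (nat \<Rightarrow> 'a) list \<Rightarrow> 'x \<Rightarrow> real" where
  "cond_den N Xs Q1 Q g i t h x =
     (\<Sum>xs\<in>{xs \<in> traj N t Xs. (xs ! (t - 1)) i = x}. pr_x N Q1 Q g t xs h)"

definition kernels :: "nat \<Rightarrow> nat \<Rightarrow> (nat \<Rightarrow> 'x set) \<Rightarrow> (nat \<Rightarrow> 'a set) \<Rightarrow> (nat \<Rightarrow> 'x \<Rightarrow> real)
   \<Rightarrow> (nat \<Rightarrow> nat \<Rightarrow> 'x \<Rightarrow> (nat \<Rightarrow> 'a) \<Rightarrow> 'x \<Rightarrow> real) \<Rightarrow> bool" where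
  "kernels N T Xs As Q1 Q \<longleftrightarrow>
     (\<forall>j\<in>{1..N}. (\<forall>x\<in>Xs j. Q1 j x \<ge> 0) \<and> (\<Sum>x\<in>Xs j. Q1 j x) = 1) \<and>
     (\<forall>j\<in>{1..N}. \<forall>t\<in>{2..T+1}. \<forall>x\<in>Xs j. \<forall>a\<in>profiles N As.
        (\<forall>y\<in>Xs j. Q j t x a y \<ge> 0) \<and> (\<Sum>y\<in>Xs j. Q j t x a y) = 1)"

definition strategy :: "nat \<Rightarrow> nat \<Rightarrow> (nat \<Rightarrow> 'x set) \<Rightarrow> (nat \<Rightarrow> 'a set) \<Rightarrow> nat
   \<Rightarrow> (nat \<Rightarrow> (nat \<Rightarrow> 'a) list \<Rightarrow> 'x list \<Rightarrow> 'a \<Rightarrow> real) \<Rightarrow> bool" where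
  "strategy N T Xs As j gj \<longleftrightarrow>
     (\<forall>t\<in>{1..T}. \<forall>h xh. length h = t - 1 \<and> set h \<subseteq> profiles N As \<and> length xh = t \<and> set xh \<subseteq> Xs j \<longrightarrow>
        (\<forall>a\<in>As j. gj t h xh a \<ge> 0) \<and> (\<Sum>a\<in>As j. gj t h xh a) = 1)"

definition strategy_profile :: "nat \<Rightarrow> nat \<Rightarrow> (nat \<Rightarrow> 'x set) \<Rightarrow> (nat \<Rightarrow> 'a set)
   \<Rightarrow> (nat \<Rightarrow> nat \<Rightarrow> (nat \<Rightarrow> 'a) list \<Rightarrow> 'x list \<Rightarrow> 'a \<Rightarrow> real) \<Rightarrow> bool" where
  "strategy_profile N T Xs As g \<longleftrightarrow> (\<forall>j\<in>{1..N}. strategy N T Xs As j (g j))"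

definition restricted_strategy :: "nat \<Rightarrow> nat \<Rightarrow> (nat \<Rightarrow> 'x set) \<Rightarrow> (nat \<Rightarrow> 'a set) \<Rightarrow> nat
   \<Rightarrow> (nat \<Rightarrow> (nat \<Rightarrow> 'a) list \<Rightarrow> 'x \<Rightarrow> 'a \<Rightarrow> real) \<Rightarrow> bool" where
  "restricted_strategy N T Xs As j s \<longleftrightarrow>
     (\<forall>t\<in>{1..T}. \<forall>h x. length h = t - 1 \<and> set h \<subseteq> profiles N As \<and> x \<in> Xs j \<longrightarrow>
        (\<forall>a\<in>As j. s t h x a \<ge> 0) \<and> (\<Sum>a\<in>As j. s t h x a) = 1)"

definition lift_restricted :: "(nat \<Rightarrow> (nat \<Rightarrow> 'a) list \<Rightarrow> 'x \<Rightarrow> 'a \<Rightarrow> real)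
   \<Rightarrow> nat \<Rightarrow> (nat \<Rightarrow> 'a) list \<Rightarrow> 'x list \<Rightarrow> 'a \<Rightarrow> real" where
  "lift_restricted s = (\<lambda>t h xh a. s t h (last xh) a)"

end

theory Submission imports Defs begin

definition col :: "nat \<Rightarrow> (nat \<Rightarrow> 'x) list \<Rightarrow> 'x list" where "col j xs = map (\<lambda>x. x j) xs"
definition lists_n :: "nat \<Rightarrow> 'x set \<Rightarrow> 'x list set" where "lists_n n S = {l. length l = n \<and> set l \<subseteq> S}"
definition build :: "nat \<Rightarrow> nat \<Rightarrow> (nat \<Rightarrow> 'x list) \<Rightarrow> (nat \<Rightarrow> 'x) list" where
  "build N n c = map (\<lambda>k. \<lambda>j\<in>{1..N}. c j ! k) [0..<n]"

lemma finite_lists_n: "finite S \<Longrightarrow> finite (lists_n n S)"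
  unfolding lists_n_def using finite_lists_length_eq[of S n] by (simp add: conj_commute)

lemma col_build: "j \<in> {1..N} \<Longrightarrow> length (c j) = n \<Longrightarrow> col j (build N n c) = c j"
  by (auto simp: col_def build_def intro!: nth_equalityI)

lemma build_profiles:
  assumes "c \<in> PiE {1..N} (\<lambda>j. {xj\<in>lists_n n (Xs j). R j xj})"
  shows "set (build N n c) \<subseteq> profiles N Xs"
proof
  fix p assume "p \<in> set (build N n c)"
  then obtain k where k: "k < n" and p: "p = (\<lambda>j\<in>{1..N}. c j ! k)" by (auto simp: build_def)
  have "\<And>j. j \<in> {1..N} \<Longrightarrow> c j ! k \<in> Xs j"
  proof -
    fix j assume j: "j \<in> {1..N}"
    then have "length (c j) = n" "set (c j) \<subseteq> Xs j" using assms by (auto simp: lists_n_def PiE_iff)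
    then show "c j ! k \<in> Xs j" using k by (metis nth_mem subsetD)
  qed
  then show "p \<in> profiles N Xs" unfolding p profiles_def by (simp add: PiE_iff)
qed

lemma FL:
  fixes f :: "nat \<Rightarrow> 'x list \<Rightarrow> real"
  assumes fin: "\<And>j. j \<in> {1..N} \<Longrightarrow> finite (Xs j)"
  shows "(\<Sum>xs\<in>{xs\<in>traj N n Xs. \<forall>j\<in>{1..N}. R j (col j xs)}. \<Prod>j\<in>{1..N}. f j (col j xs))
       = (\<Prod>j\<in>{1..N}. \<Sum>xj\<in>{xj\<in>lists_n n (Xs j). R j xj}. f j xj)"
proof -
  let ?B = "\<lambda>j. {xj\<in>lists_n n (Xs j). R j xj}"
  have fB: "\<And>j. j \<in> {1..N} \<Longrightarrow> finite (?B j)"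
    using finite_lists_n[OF fin] by simp
  have "(\<Prod>j\<in>{1..N}. \<Sum>xj\<in>?B j. f j xj) = (\<Sum>c\<in>PiE {1..N} ?B. \<Prod>j\<in>{1..N}. f j (c j))"
    by (rule prod_sum_PiE[of "{1..N}" ?B f]) (simp_all add: fB)
  also have "\<dots> = (\<Sum>xs\<in>{xs\<in>traj N n Xs. \<forall>j\<in>{1..N}. R j (col j xs)}. \<Prod>j\<in>{1..N}. f j (col j xs))"
  proof (rule sum.reindex_bij_witness[where i="\<lambda>xs. \<lambda>j\<in>{1..N}. col j xs" and j="build N n"])
    fix c assume c: "c \<in> PiE {1..N} ?B"
    have len: "\<And>j. j \<in> {1..N} \<Longrightarrow> length (c j) = n" using c by (auto simp: lists_n_def PiE_iff)
    have Rc: "\<And>j. j \<in> {1..N} \<Longrightarrow> R j (c j)" using c by (auto simp: PiE_iff)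
    have colb: "\<And>j. j \<in> {1..N} \<Longrightarrow> col j (build N n c) = c j"
      using len col_build by blast
    have "set (build N n c) \<subseteq> profiles N Xs" using build_profiles[OF c] .
    moreover have "length (build N n c) = n" by (simp add: build_def)
    ultimately show "build N n c \<in> {xs\<in>traj N n Xs. \<forall>j\<in>{1..N}. R j (col j xs)}"
      using colb Rc by (simp add: traj_def)
    show "(\<Prod>j\<in>{1..N}. f j (col j (build N n c))) = (\<Prod>j\<in>{1..N}. f j (c j))"
      by (rule prod.cong) (simp_all add: colb)
    have ext: "c \<in> extensional {1..N}" using c by (simp add: PiE_iff)
    show "(\<lambda>j\<in>{1..N}. col j (build N n c)) = c"
    proof
      fix j show "(\<lambda>j\<in>{1..N}. col j (build N n c)) j = c j"
        using colb ext by (cases "j \<in> {1..N}") (auto simp: extensional_def)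
    qed
  next
    fix xs assume xs: "xs \<in> {xs\<in>traj N n Xs. \<forall>j\<in>{1..N}. R j (col j xs)}"
    then have len: "length xs = n" and st: "set xs \<subseteq> profiles N Xs" and Rx: "\<forall>j\<in>{1..N}. R j (col j xs)"
      by (auto simp: traj_def)
    show "build N n (\<lambda>j\<in>{1..N}. col j xs) = xs"
    proof (rule nth_equalityI)
      show "length (build N n (\<lambda>j\<in>{1..N}. col j xs)) = length xs" using len by (simp add: build_def)
      fix k assume "k < length (build N n (\<lambda>j\<in>{1..N}. col j xs))"
      then have k: "k < n" by (simp add: build_def)
      have "xs ! k \<in> profiles N Xs" using st k len by auto
      then have ext: "xs ! k \<in> extensional {1..N}" by (simp add: profiles_def PiE_iff)
      show "build N n (\<lambda>j\<in>{1..N}. col j xs) ! k = xs ! k"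
      proof
        fix j show "(build N n (\<lambda>j\<in>{1..N}. col j xs) ! k) j = (xs ! k) j"
          using k len ext by (cases "j \<in> {1..N}") (auto simp: build_def col_def extensional_def)
      qed
    qed
    have "\<And>j. j \<in> {1..N} \<Longrightarrow> col j xs \<in> ?B j"
    proof -
      fix j assume j: "j \<in> {1..N}"
      have "set (col j xs) \<subseteq> Xs j"
      proof
        fix z assume "z \<in> set (col j xs)"
        then obtain p where "p \<in> set xs" "z = p j" by (auto simp: col_def)
        then show "z \<in> Xs j" using st j by (auto simp: profiles_def PiE_iff)
      qed
      then show "col j xs \<in> ?B j" using len Rx j by (simp add: lists_n_def col_def)
    qed
    then show "(\<lambda>j\<in>{1..N}. col j xs) \<in> PiE {1..N} ?B" by (simp add: PiE_iff)
  qed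
  finally show ?thesis by simp
qed

lemma FLi:
  fixes f :: "nat \<Rightarrow> 'x list \<Rightarrow> real"
  assumes fin: "\<And>j. j \<in> {1..N} \<Longrightarrow> finite (Xs j)" and i: "i \<in> {1..N}"
  shows "(\<Sum>xs\<in>{xs\<in>traj N n Xs. P (col i xs)}. (\<Prod>j\<in>{1..N}. f j (col j xs)) * w (col i xs))
       = (\<Sum>xi\<in>{xi\<in>lists_n n (Xs i). P xi}. f i xi * w xi) * (\<Prod>j\<in>{1..N}-{i}. \<Sum>xj\<in>lists_n n (Xs j). f j xj)"
proof -
  define f' where "f' = f(i := (\<lambda>xi. f i xi * w xi))"
  define R where "R = (\<lambda>j xj. j = i \<longrightarrow> P xj)"
  have fin1: "finite {1..N}" by simp
  have S: "{xs\<in>traj N n Xs. P (col i xs)} = {xs\<in>traj N n Xs. \<forall>j\<in>{1..N}. R j (col j xs)}"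
    using i by (auto simp: R_def)
  have T: "\<And>xs. (\<Prod>j\<in>{1..N}. f j (col j xs)) * w (col i xs) = (\<Prod>j\<in>{1..N}. f' j (col j xs))"
  proof -
    fix xs
    have "(\<Prod>j\<in>{1..N}. f' j (col j xs)) = f' i (col i xs) * (\<Prod>j\<in>{1..N}-{i}. f' j (col j xs))"
      by (rule prod.remove[OF fin1 i])
    also have "(\<Prod>j\<in>{1..N}-{i}. f' j (col j xs)) = (\<Prod>j\<in>{1..N}-{i}. f j (col j xs))"
      by (rule prod.cong) (auto simp: f'_def)
    finally show "(\<Prod>j\<in>{1..N}. f j (col j xs)) * w (col i xs) = (\<Prod>j\<in>{1..N}. f' j (col j xs))"
      using prod.remove[OF fin1 i, of "\<lambda>j. f j (col j xs)"] by (simp add: f'_def)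
  qed
  have "(\<Sum>xs\<in>{xs\<in>traj N n Xs. P (col i xs)}. (\<Prod>j\<in>{1..N}. f j (col j xs)) * w (col i xs))
     = (\<Sum>xs\<in>{xs\<in>traj N n Xs. \<forall>j\<in>{1..N}. R j (col j xs)}. \<Prod>j\<in>{1..N}. f' j (col j xs))"
    unfolding S T ..
  also have "\<dots> = (\<Prod>j\<in>{1..N}. \<Sum>xj\<in>{xj\<in>lists_n n (Xs j). R j xj}. f' j xj)"
    by (rule FL[OF fin])
  also have "\<dots> = (\<Sum>xj\<in>{xj\<in>lists_n n (Xs i). R i xj}. f' i xj) * (\<Prod>j\<in>{1..N}-{i}. \<Sum>xj\<in>{xj\<in>lists_n n (Xs j). R j xj}. f' j xj)"
    by (rule prod.remove[OF fin1 i])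
  also have "(\<Prod>j\<in>{1..N}-{i}. \<Sum>xj\<in>{xj\<in>lists_n n (Xs j). R j xj}. f' j xj) = (\<Prod>j\<in>{1..N}-{i}. \<Sum>xj\<in>lists_n n (Xs j). f j xj)"
    by (rule prod.cong) (auto simp: R_def f'_def)
  finally show ?thesis by (simp add: R_def f'_def)
qed

definition Fp :: "(nat \<Rightarrow> 'x \<Rightarrow> real) \<Rightarrow> (nat \<Rightarrow> nat \<Rightarrow> 'x \<Rightarrow> (nat \<Rightarrow> 'a) \<Rightarrow> 'x \<Rightarrow> real)
   \<Rightarrow> (nat \<Rightarrow> (nat \<Rightarrow> 'a) list \<Rightarrow> 'x list \<Rightarrow> 'a \<Rightarrow> real) \<Rightarrow> nat \<Rightarrow> nat \<Rightarrow> 'x list \<Rightarrow> (nat \<Rightarrow> 'a) list \<Rightarrow> real" where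
  "Fp Q1 Q gj j n xj as = Q1 j (xj ! 0) *
     (\<Prod>k\<in>{1..<n}. gj k (take (k - 1) as) (take k xj) ((as ! (k - 1)) j) * Q j (k + 1) (xj ! (k - 1)) (as ! (k - 1)) (xj ! k))"

lemma pr_x_Fp:
  assumes "length xs = n" "n \<ge> 1"
  shows "pr_x N Q1 Q g n xs as = (\<Prod>j\<in>{1..N}. Fp Q1 Q (g j) j n (col j xs) as)"
proof -
  have c0: "\<And>j. col j xs ! 0 = (xs ! 0) j" using assms by (simp add: col_def)
  have ck: "\<And>j k. k < n \<Longrightarrow> col j xs ! k = (xs ! k) j"
    using assms by (auto simp: col_def)
  have ct: "\<And>j k. take k (col j xs) = map (\<lambda>x. x j) (take k xs)"
    by (simp add: col_def take_map)
  have "(\<Prod>j\<in>{1..N}. Fp Q1 Q (g j) j n (col j xs) as)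
     = (\<Prod>j\<in>{1..N}. Q1 j ((xs ! 0) j)) * (\<Prod>j\<in>{1..N}. \<Prod>k\<in>{1..<n}.
          g j k (take (k - 1) as) (map (\<lambda>x. x j) (take k xs)) ((as ! (k - 1)) j) * Q j (k + 1) ((xs ! (k - 1)) j) (as ! (k - 1)) ((xs ! k) j))"
    unfolding Fp_def c0 prod.distrib[symmetric]
    by (intro prod.cong refl arg_cong2[where f="(*)"]) (auto simp: ck ct)
  also have "(\<Prod>j\<in>{1..N}. \<Prod>k\<in>{1..<n}.
          g j k (take (k - 1) as) (map (\<lambda>x. x j) (take k xs)) ((as ! (k - 1)) j) * Q j (k + 1) ((xs ! (k - 1)) j) (as ! (k - 1)) ((xs ! k) j))
     = (\<Prod>k\<in>{1..<n}. (\<Prod>j\<in>{1..N}. g j k (take (k - 1) as) (map (\<lambda>x. x j) (take k xs)) ((as ! (k - 1)) j)) *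
           (\<Prod>j\<in>{1..N}. Q j (k + 1) ((xs ! (k - 1)) j) (as ! (k - 1)) ((xs ! k) j)))"
    by (subst prod.swap) (simp add: prod.distrib)
  finally show ?thesis by (simp add: pr_x_def)
qed

lemma Fp_take: "n - 1 \<le> m \<Longrightarrow> Fp Q1 Q gj j n xj (take m as) = Fp Q1 Q gj j n xj as"
  unfolding Fp_def by (intro arg_cong2[where f="(*)"] refl prod.cong) (auto simp: min_def)

lemma Fp_1: "Fp Q1 Q gj j (Suc 0) xj as = Q1 j (xj ! 0)"
  by (simp add: Fp_def)

lemma Fp_snoc:
  assumes "length xj = n" "n \<ge> 1"
  shows "Fp Q1 Q gj j (Suc n) (xj @ [z]) as = Fp Q1 Q gj j n xj as *
     (gj n (take (n - 1) as) xj ((as ! (n - 1)) j) * Q j (n + 1) (xj ! (n - 1)) (as ! (n - 1)) z)"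
proof -
  have iv: "{1..<Suc n} = insert n {1..<n}" using assms by auto
  have "(\<Prod>k\<in>{1..<n}. gj k (take (k - 1) as) (take k (xj @ [z])) ((as ! (k - 1)) j) * Q j (k + 1) ((xj @ [z]) ! (k - 1)) (as ! (k - 1)) ((xj @ [z]) ! k))
      = (\<Prod>k\<in>{1..<n}. gj k (take (k - 1) as) (take k xj) ((as ! (k - 1)) j) * Q j (k + 1) (xj ! (k - 1)) (as ! (k - 1)) (xj ! k))"
    using assms by (intro prod.cong refl) (auto simp: nth_append)
  then show ?thesis using assms unfolding Fp_def iv
    by (simp add: nth_append algebra_simps)
qed

lemma Fp_nonneg:
  assumes ker: "kernels N T Xs As Q1 Q" and st: "strategy N T Xs As j gj" and j: "j \<in> {1..N}"
    and xj: "xj \<in> lists_n n (Xs j)" and n: "1 \<le> n" "n \<le> T + 1"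
    and as: "n - 1 \<le> length as" "set as \<subseteq> profiles N As"
  shows "Fp Q1 Q gj j n xj as \<ge> 0"
proof -
  have lx: "length xj = n" and sx: "set xj \<subseteq> Xs j" using xj by (auto simp: lists_n_def)
  have "xj ! 0 \<in> Xs j" using lx sx n by (auto intro!: subsetD[OF sx] nth_mem)
  then have q1: "Q1 j (xj ! 0) \<ge> 0" using ker j unfolding kernels_def by auto
  moreover have kf: "\<forall>k\<in>{1..<n}. gj k (take (k - 1) as) (take k xj) ((as ! (k - 1)) j) * Q j (k + 1) (xj ! (k - 1)) (as ! (k - 1)) (xj ! k) \<ge> 0"
  proof
    fix k assume k: "k \<in> {1..<n}"
    have ak: "as ! (k - 1) \<in> profiles N As" using k as by (auto intro!: nth_mem)
    then have akj: "(as ! (k - 1)) j \<in> As j" using j by (auto simp: profiles_def PiE_iff)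
    have "set (take (k - 1) as) \<subseteq> profiles N As" using as by (meson set_take_subset subset_trans)
    moreover have "set (take k xj) \<subseteq> Xs j" using sx by (meson set_take_subset subset_trans)
    ultimately have "gj k (take (k - 1) as) (take k xj) ((as ! (k - 1)) j) \<ge> 0"
      using st k n as lx akj unfolding strategy_def by auto
    moreover have "Q j (k + 1) (xj ! (k - 1)) (as ! (k - 1)) (xj ! k) \<ge> 0"
    proof -
      have "xj ! (k - 1) \<in> Xs j" "xj ! k \<in> Xs j" using k lx sx by (auto intro!: subsetD[OF sx] nth_mem)
      moreover have "k + 1 \<in> {2..T+1}" using k n by auto
      ultimately show ?thesis using ker j ak unfolding kernels_def by blast
    qed
    ultimately show "gj k (take (k - 1) as) (take k xj) ((as ! (k - 1)) j) * Q j (k + 1) (xj ! (k - 1)) (as ! (k - 1)) (xj ! k) \<ge> 0"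
      by simp
  qed
  show ?thesis unfolding Fp_def by (rule mult_nonneg_nonneg[OF q1 prod_nonneg[OF bspec[OF kf]]])
qed

lemma sum_lists_snoc:
  fixes f :: "'x list \<Rightarrow> real"
  assumes "finite S"
  shows "(\<Sum>xj\<in>lists_n (Suc n) S. f xj) = (\<Sum>xj\<in>lists_n n S. \<Sum>z\<in>S. f (xj @ [z]))"
proof -
  have eq: "lists_n (Suc n) S = (\<lambda>(l, z). l @ [z]) ` (lists_n n S \<times> S)"
  proof
    show "lists_n (Suc n) S \<subseteq> (\<lambda>(l, z). l @ [z]) ` (lists_n n S \<times> S)"
    proof
      fix l assume l: "l \<in> lists_n (Suc n) S"
      then have ne: "l \<noteq> []" by (auto simp: lists_n_def)
      then have "l = butlast l @ [last l]" "l \<noteq> []" by simp_all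
      moreover have "butlast l \<in> lists_n n S" "last l \<in> S" using l
        by (auto simp: lists_n_def dest: in_set_butlastD) (metis last_in_set list.size(3) nat.distinct(1) subsetD)
      ultimately show "l \<in> (\<lambda>(l, z). l @ [z]) ` (lists_n n S \<times> S)"
        by (intro image_eqI[where x="(butlast l, last l)"]) auto
    qed
    show "(\<lambda>(l, z). l @ [z]) ` (lists_n n S \<times> S) \<subseteq> lists_n (Suc n) S"
      by (auto simp: lists_n_def)
  qed
  have inj: "inj_on (\<lambda>(l, z). l @ [z]) (lists_n n S \<times> S)"
    by (auto simp: inj_on_def)
  show ?thesis unfolding eq sum.reindex[OF inj]
    by (simp add: sum.cartesian_product split_def)
qed

lemma AP:
  fixes f :: "nat \<Rightarrow> 'a \<Rightarrow> real"
  assumes fin: "\<And>j. j \<in> {1..N} \<Longrightarrow> finite (As j)" and i: "i \<in> {1..N}" and a: "a \<in> As i"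
  shows "(\<Sum>ap\<in>{ap\<in>profiles N As. ap i = a}. \<Prod>j\<in>{1..N}. f j (ap j)) = f i a * (\<Prod>j\<in>{1..N}-{i}. \<Sum>b\<in>As j. f j b)"
proof -
  define B where "B = (\<lambda>j. if j = i then {a} else As j)"
  have S: "{ap\<in>profiles N As. ap i = a} = PiE {1..N} B"
  proof (rule set_eqI, rule iffI)
    fix ap assume "ap \<in> {ap\<in>profiles N As. ap i = a}"
    then show "ap \<in> PiE {1..N} B" by (auto simp: profiles_def PiE_iff B_def)
  next
    fix ap assume ap: "ap \<in> PiE {1..N} B"
    then have "ap i \<in> B i" using i by (auto simp: PiE_iff)
    then have "ap i = a" by (simp add: B_def)
    moreover have "ap \<in> profiles N As" using ap a by (auto simp: profiles_def PiE_iff B_def split: if_split_asm)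
    ultimately show "ap \<in> {ap\<in>profiles N As. ap i = a}" by simp
  qed
  have "(\<Sum>ap\<in>PiE {1..N} B. \<Prod>j\<in>{1..N}. f j (ap j)) = (\<Prod>j\<in>{1..N}. \<Sum>b\<in>B j. f j b)"
    by (rule prod_sum_PiE[symmetric]) (auto simp: B_def fin)
  also have "\<dots> = (\<Sum>b\<in>B i. f i b) * (\<Prod>j\<in>{1..N}-{i}. \<Sum>b\<in>B j. f j b)"
    by (rule prod.remove) (use i in auto)
  also have "(\<Prod>j\<in>{1..N}-{i}. \<Sum>b\<in>B j. f j b) = (\<Prod>j\<in>{1..N}-{i}. \<Sum>b\<in>As j. f j b)"
    by (rule prod.cong) (auto simp: B_def)
  finally show ?thesis unfolding S by (simp add: B_def)
qed

lemma sum_pr_x: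
  assumes fin: "\<And>j. j \<in> {1..N} \<Longrightarrow> finite (Xs j)" and i: "i \<in> {1..N}" and n: "n \<ge> 1"
  shows "(\<Sum>xs\<in>{xs\<in>traj N n Xs. P (col i xs)}. pr_x N Q1 Q G n xs as * w (col i xs))
       = (\<Sum>xi\<in>{xi\<in>lists_n n (Xs i). P xi}. Fp Q1 Q (G i) i n xi as * w xi)
         * (\<Prod>j\<in>{1..N}-{i}. \<Sum>xj\<in>lists_n n (Xs j). Fp Q1 Q (G j) j n xj as)"
proof -
  have "(\<Sum>xs\<in>{xs\<in>traj N n Xs. P (col i xs)}. pr_x N Q1 Q G n xs as * w (col i xs))
     = (\<Sum>xs\<in>{xs\<in>traj N n Xs. P (col i xs)}. (\<Prod>j\<in>{1..N}. Fp Q1 Q (G j) j n (col j xs) as) * w (col i xs))"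
  proof (rule sum.cong[OF refl])
    fix xs assume "xs \<in> {xs\<in>traj N n Xs. P (col i xs)}"
    then have "length xs = n" by (simp add: traj_def)
    then show "pr_x N Q1 Q G n xs as * w (col i xs) = (\<Prod>j\<in>{1..N}. Fp Q1 Q (G j) j n (col j xs) as) * w (col i xs)"
      by (simp add: pr_x_Fp[OF _ n])
  qed
  show ?thesis
    unfolding \<open>(\<Sum>xs\<in>{xs\<in>traj N n Xs. P (col i xs)}. pr_x N Q1 Q G n xs as * w (col i xs)) = _\<close>
    by (rule FLi[OF fin i, where f="\<lambda>j xj. Fp Q1 Q (G j) j n xj as"])
qed

lemma col_lists:
  assumes "xs \<in> traj N n Xs" "j \<in> {1..N}"
  shows "col j xs \<in> lists_n n (Xs j)"
proof -
  have len: "length xs = n" and st: "set xs \<subseteq> profiles N Xs" using assms by (auto simp: traj_def)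
  have "set (col j xs) \<subseteq> Xs j"
  proof
    fix z assume "z \<in> set (col j xs)"
    then obtain p where "p \<in> set xs" "z = p j" by (auto simp: col_def)
    then show "z \<in> Xs j" using st assms(2) by (auto simp: profiles_def PiE_iff)
  qed
  then show ?thesis using len by (simp add: lists_n_def col_def)
qed

lemma col_nth: "k < length xs \<Longrightarrow> col j xs ! k = (xs ! k) j"
  by (simp add: col_def)

lemma sum_snoc_y:
  fixes \<phi> :: "'x list \<Rightarrow> real"
  assumes fin: "finite S" and y: "y \<in> S"
  shows "(\<Sum>xi\<in>{xi\<in>lists_n (Suc t) S. P (take t xi) \<and> xi ! t = y}. \<phi> xi)
       = (\<Sum>xi\<in>{xi\<in>lists_n t S. P xi}. \<phi> (xi @ [y]))"
proof -
  have fl: "finite (lists_n (Suc t) S)" "finite (lists_n t S)" using finite_lists_n[OF fin] by auto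
  have "(\<Sum>xi\<in>{xi\<in>lists_n (Suc t) S. P (take t xi) \<and> xi ! t = y}. \<phi> xi)
      = (\<Sum>xi\<in>lists_n (Suc t) S. if P (take t xi) \<and> xi ! t = y then \<phi> xi else 0)"
    by (rule sum.inter_filter[OF fl(1)])
  also have "\<dots> = (\<Sum>xi\<in>lists_n t S. \<Sum>z\<in>S. if P (take t (xi @ [z])) \<and> (xi @ [z]) ! t = y then \<phi> (xi @ [z]) else 0)"
    by (rule sum_lists_snoc[OF fin])
  also have "\<dots> = (\<Sum>xi\<in>lists_n t S. if P xi then \<phi> (xi @ [y]) else 0)"
  proof (rule sum.cong[OF refl])
    fix xi assume "xi \<in> lists_n t S"
    then have l: "length xi = t" by (simp add: lists_n_def)
    have "(\<Sum>z\<in>S. if P (take t (xi @ [z])) \<and> (xi @ [z]) ! t = y then \<phi> (xi @ [z]) else 0)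
        = (\<Sum>z\<in>S. if z = y then (if P xi then \<phi> (xi @ [y]) else 0) else 0)"
      by (rule sum.cong[OF refl]) (auto simp: l nth_append)
    also have "\<dots> = (if P xi then \<phi> (xi @ [y]) else 0)" using fin y by simp
    finally show "(\<Sum>z\<in>S. if P (take t (xi @ [z])) \<and> (xi @ [z]) ! t = y then \<phi> (xi @ [z]) else 0)
        = (if P xi then \<phi> (xi @ [y]) else 0)" .
  qed
  also have "\<dots> = (\<Sum>xi\<in>{xi\<in>lists_n t S. P xi}. \<phi> (xi @ [y]))"
    by (rule sum.inter_filter[OF fl(2), symmetric])
  finally show ?thesis .
qed

lemma sum_by_last:
  fixes \<phi> :: "'x list \<Rightarrow> real"
  assumes fin: "finite S" and t: "t \<ge> 1"
  shows "(\<Sum>xi\<in>lists_n t S. \<phi> xi) = (\<Sum>x\<in>S. \<Sum>xi\<in>{xi\<in>lists_n t S. xi ! (t - 1) = x}. \<phi> xi)"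
proof -
  have fl: "finite (lists_n t S)" using finite_lists_n[OF fin] by auto
  have "(\<Sum>x\<in>S. \<Sum>xi\<in>{xi\<in>lists_n t S. xi ! (t - 1) = x}. \<phi> xi)
      = (\<Sum>x\<in>S. \<Sum>xi\<in>lists_n t S. if xi ! (t - 1) = x then \<phi> xi else 0)"
    by (simp add: sum.inter_filter[OF fl])
  also have "\<dots> = (\<Sum>xi\<in>lists_n t S. \<Sum>x\<in>S. if xi ! (t - 1) = x then \<phi> xi else 0)"
    by (rule sum.swap)
  also have "\<dots> = (\<Sum>xi\<in>lists_n t S. \<phi> xi)"
  proof (rule sum.cong[OF refl])
    fix xi assume "xi \<in> lists_n t S"
    then have "xi ! (t - 1) \<in> S" using t by (auto simp: lists_n_def intro!: subsetD[of "set xi" S] nth_mem)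
    then show "(\<Sum>x\<in>S. if xi ! (t - 1) = x then \<phi> xi else 0) = \<phi> xi" using fin by simp
  qed
  finally show ?thesis by simp
qed

theorem claim3:
  fixes N T :: nat and i :: nat
    and Xs :: "nat \<Rightarrow> 'x set" and As :: "nat \<Rightarrow> 'a set"
    and Q1 :: "nat \<Rightarrow> 'x \<Rightarrow> real"
    and Q :: "nat \<Rightarrow> nat \<Rightarrow> 'x \<Rightarrow> (nat \<Rightarrow> 'a) \<Rightarrow> 'x \<Rightarrow> real"
    and g :: "nat \<Rightarrow> nat \<Rightarrow> (nat \<Rightarrow> 'a) list \<Rightarrow> 'x list \<Rightarrow> 'a \<Rightarrow> real"
    and s :: "nat \<Rightarrow> (nat \<Rightarrow> 'a) list \<Rightarrow> 'x \<Rightarrow> 'a \<Rightarrow> real"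
  assumes fin: "\<forall>j\<in>{1..N}. finite (Xs j) \<and> Xs j \<noteq> {} \<and> finite (As j) \<and> As j \<noteq> {}"
    and ker: "kernels N T Xs As Q1 Q"
    and prof: "strategy_profile N T Xs As g"
    and i: "i \<in> {1..N}"
    and s_strat: "restricted_strategy N T Xs As i s"
    and s_def: "\<forall>t\<in>{1..T}. \<forall>h x a. length h = t - 1 \<and> set h \<subseteq> profiles N As \<and> x \<in> Xs i \<and> a \<in> As i
                  \<and> cond_den N Xs Q1 Q g i t h x > 0 \<longrightarrow>
                  s t h x a = cond_num N Xs As Q1 Q g i t h x a / cond_den N Xs Q1 Q g i t h x"
  shows "(\<forall>g'. strategy_profile N T Xs As g' \<and> g' i = g i \<longrightarrow>
            (\<forall>t\<in>{1..T}. \<forall>h x a. length h = t - 1 \<and> set h \<subseteq> profiles N As \<and> x \<in> Xs i \<and> a \<in> As i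
               \<and> cond_den N Xs Q1 Q g i t h x > 0 \<and> cond_den N Xs Q1 Q g' i t h x > 0 \<longrightarrow>
               cond_num N Xs As Q1 Q g' i t h x a / cond_den N Xs Q1 Q g' i t h x
                 = cond_num N Xs As Q1 Q g i t h x a / cond_den N Xs Q1 Q g i t h x))
       \<and> (\<forall>t\<in>{1..T}. \<forall>x\<in>Xs i. \<forall>y\<in>Xs i. \<forall>as. length as = t \<and> set as \<subseteq> profiles N As \<longrightarrow>
            prob_next N Xs Q1 Q (g(i := lift_restricted s)) i t x y as
              = prob_next N Xs Q1 Q g i t x y as)"
proof -
  have finX: "\<And>j. j \<in> {1..N} \<Longrightarrow> finite (Xs j)" and finA: "\<And>j. j \<in> {1..N} \<Longrightarrow> finite (As j)"
    using fin by auto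
  have fin1: "finite {1..N}" by simp
  define gt where "gt = g(i := lift_restricted s)"
  define M where "M G t x as = (\<Sum>xi\<in>{xi\<in>lists_n t (Xs i). xi ! (t - 1) = x}. Fp Q1 Q (G i) i t xi as)"
    for G :: "nat \<Rightarrow> nat \<Rightarrow> (nat \<Rightarrow> 'a) list \<Rightarrow> 'x list \<Rightarrow> 'a \<Rightarrow> real" and t x as
  define Cp where "Cp G t as = (\<Prod>j\<in>{1..N}-{i}. \<Sum>xj\<in>lists_n t (Xs j). Fp Q1 Q (G j) j t xj as)"
    for G :: "nat \<Rightarrow> nat \<Rightarrow> (nat \<Rightarrow> 'a) list \<Rightarrow> 'x list \<Rightarrow> 'a \<Rightarrow> real" and t as
  define K where "K G t x as = (\<Sum>xi\<in>{xi\<in>lists_n t (Xs i). xi ! (t - 1) = x}.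
        Fp Q1 Q (G i) i t xi as * G i t (take (t - 1) as) xi ((as ! (t - 1)) i))"
    for G :: "nat \<Rightarrow> nat \<Rightarrow> (nat \<Rightarrow> 'a) list \<Rightarrow> 'x list \<Rightarrow> 'a \<Rightarrow> real" and t x as

  have den: "cond_den N Xs Q1 Q G i t h x = M G t x h * Cp G t h" if t: "t \<ge> 1" for G t h x
  proof -
    have S: "{xs \<in> traj N t Xs. (xs ! (t - 1)) i = x} = {xs \<in> traj N t Xs. (\<lambda>xi. xi ! (t - 1) = x) (col i xs)}"
      using t by (auto simp: traj_def col_nth)
    show ?thesis
      unfolding cond_den_def S M_def Cp_def
      using sum_pr_x[OF finX i t, where P="\<lambda>xi. xi ! (t - 1) = x" and as=h and w="\<lambda>_. 1"] by simp
  qed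

  have num: "cond_num N Xs As Q1 Q G i t h x a
      = (\<Sum>xi\<in>{xi\<in>lists_n t (Xs i). xi ! (t - 1) = x}. Fp Q1 Q (G i) i t xi h * G i t h xi a) * Cp G t h"
    if G: "strategy_profile N T Xs As G" and t: "t \<in> {1..T}" and h: "length h = t - 1" "set h \<subseteq> profiles N As"
      and a: "a \<in> As i" for G t h x a
  proof -
    have t1: "t \<ge> 1" using t by simp
    have S: "{xs \<in> traj N t Xs. (xs ! (t - 1)) i = x} = {xs \<in> traj N t Xs. (\<lambda>xi. xi ! (t - 1) = x) (col i xs)}"
      using t1 by (auto simp: traj_def col_nth)
    have inner: "(\<Sum>ap\<in>{ap \<in> profiles N As. ap i = a}. pr_xa N Q1 Q G t xs (h @ [ap]))
        = pr_x N Q1 Q G t xs h * G i t h (col i xs) a" if xs: "xs \<in> traj N t Xs" for xs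
    proof -
      have "\<And>ap. pr_xa N Q1 Q G t xs (h @ [ap]) = pr_x N Q1 Q G t xs h * (\<Prod>j\<in>{1..N}. G j t h (col j xs) (ap j))"
        using h by (simp add: pr_xa_def col_def nth_append)
      then have "(\<Sum>ap\<in>{ap \<in> profiles N As. ap i = a}. pr_xa N Q1 Q G t xs (h @ [ap]))
          = pr_x N Q1 Q G t xs h * (\<Sum>ap\<in>{ap \<in> profiles N As. ap i = a}. \<Prod>j\<in>{1..N}. G j t h (col j xs) (ap j))"
        by (simp add: sum_distrib_left)
      also have "(\<Sum>ap\<in>{ap \<in> profiles N As. ap i = a}. \<Prod>j\<in>{1..N}. G j t h (col j xs) (ap j))
          = G i t h (col i xs) a * (\<Prod>j\<in>{1..N}-{i}. \<Sum>b\<in>As j. G j t h (col j xs) b)"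
        by (rule AP[where As=As, OF finA i a])
      also have "(\<Prod>j\<in>{1..N}-{i}. \<Sum>b\<in>As j. G j t h (col j xs) b) = 1"
      proof (rule prod.neutral, rule ballI)
        fix j assume j: "j \<in> {1..N}-{i}"
        have "col j xs \<in> lists_n t (Xs j)" using col_lists[OF xs] j by simp
        then show "(\<Sum>b\<in>As j. G j t h (col j xs) b) = 1"
          using G j t h unfolding strategy_profile_def strategy_def lists_n_def by auto
      qed
      finally show ?thesis by simp
    qed
    have "cond_num N Xs As Q1 Q G i t h x a = (\<Sum>xs\<in>{xs \<in> traj N t Xs. (\<lambda>xi. xi ! (t - 1) = x) (col i xs)}.
           pr_x N Q1 Q G t xs h * (\<lambda>xi. G i t h xi a) (col i xs))"
      unfolding cond_num_def S by (rule sum.cong[OF refl]) (simp add: inner)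
    show ?thesis
      unfolding \<open>cond_num N Xs As Q1 Q G i t h x a = _\<close> Cp_def
      by (rule sum_pr_x[OF finX i t1])
  qed
  have Mg: "M G t x h = M G' t x h" if "G i = G' i" for G G' t x h
    unfolding M_def using that by simp
  show ?thesis
  proof (rule conjI)
    show "\<forall>g'. strategy_profile N T Xs As g' \<and> g' i = g i \<longrightarrow>
            (\<forall>t\<in>{1..T}. \<forall>h x a. length h = t - 1 \<and> set h \<subseteq> profiles N As \<and> x \<in> Xs i \<and> a \<in> As i
               \<and> cond_den N Xs Q1 Q g i t h x > 0 \<and> cond_den N Xs Q1 Q g' i t h x > 0 \<longrightarrow>
               cond_num N Xs As Q1 Q g' i t h x a / cond_den N Xs Q1 Q g' i t h x
                 = cond_num N Xs As Q1 Q g i t h x a / cond_den N Xs Q1 Q g i t h x)"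
    proof (intro allI impI ballI)
      fix g' t h x a
      assume g': "strategy_profile N T Xs As g' \<and> g' i = g i" and t: "t \<in> {1..T}"
        and H: "length h = t - 1 \<and> set h \<subseteq> profiles N As \<and> x \<in> Xs i \<and> a \<in> As i
               \<and> cond_den N Xs Q1 Q g i t h x > 0 \<and> cond_den N Xs Q1 Q g' i t h x > 0"
      have t1: "t \<ge> 1" using t by simp
      define Ng where "Ng = (\<Sum>xi\<in>{xi\<in>lists_n t (Xs i). xi ! (t - 1) = x}. Fp Q1 Q (g i) i t xi h * g i t h xi a)"
      have n1: "cond_num N Xs As Q1 Q g' i t h x a = Ng * Cp g' t h"
        using num[of g' t h a x] g' t H unfolding Ng_def by simp
      have n2: "cond_num N Xs As Q1 Q g i t h x a = Ng * Cp g t h"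
        using num[of g t h a x] prof t H unfolding Ng_def by simp
      have d1: "cond_den N Xs Q1 Q g' i t h x = M g t x h * Cp g' t h"
        using den[OF t1, of g' h x] Mg[of g' g t x h] g' by simp
      have d2: "cond_den N Xs Q1 Q g i t h x = M g t x h * Cp g t h"
        using den[OF t1, of g h x] by simp
      have c1: "Cp g' t h \<noteq> 0" using d1 H by auto
      have c2: "Cp g t h \<noteq> 0" using d2 H by auto
      show "cond_num N Xs As Q1 Q g' i t h x a / cond_den N Xs Q1 Q g' i t h x
                 = cond_num N Xs As Q1 Q g i t h x a / cond_den N Xs Q1 Q g i t h x"
        unfolding n1 n2 d1 d2 using c1 c2 by simp
    qed
  next
    show "\<forall>t\<in>{1..T}. \<forall>x\<in>Xs i. \<forall>y\<in>Xs i. \<forall>as. length as = t \<and> set as \<subseteq> profiles N As \<longrightarrow>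
            prob_next N Xs Q1 Q (g(i := lift_restricted s)) i t x y as
              = prob_next N Xs Q1 Q g i t x y as"
    proof -
    have gti: "gt i = lift_restricted s" and gtj: "\<And>j. j \<noteq> i \<Longrightarrow> gt j = g j"
      by (simp_all add: gt_def)
    have Cpgt: "Cp gt t as = Cp g t as" for t as
      unfolding Cp_def by (rule prod.cong) (auto simp: gtj)
    have Kgt: "K gt t x as = M gt t x as * s t (take (t - 1) as) x ((as ! (t - 1)) i)" if t1: "t \<ge> 1" for t x as
      unfolding K_def M_def sum_distrib_right
    proof (rule sum.cong[OF refl])
      fix xi assume "xi \<in> {xi \<in> lists_n t (Xs i). xi ! (t - 1) = x}"
      then have l: "length xi = t" and xl: "xi ! (t - 1) = x" by (auto simp: lists_n_def)
      then have "last xi = x" using t1 by (subst last_conv_nth) auto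
      then show "Fp Q1 Q (gt i) i t xi as * gt i t (take (t - 1) as) xi ((as ! (t - 1)) i)
          = Fp Q1 Q (gt i) i t xi as * s t (take (t - 1) as) x ((as ! (t - 1)) i)"
        by (simp add: gti lift_restricted_def)
    qed
    have Ksnoc: "(\<Sum>xi\<in>{xi\<in>lists_n t (Xs i). xi ! (t - 1) = x}. Fp Q1 Q (G i) i (Suc t) (xi @ [y]) as)
        = K G t x as * Q i (Suc t) x (as ! (t - 1)) y" if t1: "t \<ge> 1" for G t x y as
      unfolding K_def sum_distrib_right
    proof (rule sum.cong[OF refl])
      fix xi assume "xi \<in> {xi \<in> lists_n t (Xs i). xi ! (t - 1) = x}"
      then have l: "length xi = t" and xl: "xi ! (t - 1) = x" by (auto simp: lists_n_def)
      show "Fp Q1 Q (G i) i (Suc t) (xi @ [y]) as = Fp Q1 Q (G i) i t xi as * G i t (take (t - 1) as) xi ((as ! (t - 1)) i) *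
          Q i (Suc t) x (as ! (t - 1)) y"
        using Fp_snoc[OF l t1, of Q1 Q "G i" i y as] xl by simp
    qed
    have pn: "prob_next N Xs Q1 Q G i t x y as = K G t x as * Q i (Suc t) x (as ! (t - 1)) y * Cp G (Suc t) as"
      if t1: "t \<ge> 1" and y: "y \<in> Xs i" for G t x y as
    proof -
      have one: "Suc t \<ge> 1" by simp
      have S: "{xs \<in> traj N (t + 1) Xs. (xs ! (t - 1)) i = x \<and> (xs ! t) i = y}
          = {xs \<in> traj N (Suc t) Xs. (\<lambda>xi. xi ! (t - 1) = x \<and> xi ! t = y) (col i xs)}"
        using t1 by (auto simp: traj_def col_nth)
      have S2: "{xi \<in> lists_n (Suc t) (Xs i). xi ! (t - 1) = x \<and> xi ! t = y}
          = {xi \<in> lists_n (Suc t) (Xs i). (\<lambda>l. l ! (t - 1) = x) (take t xi) \<and> xi ! t = y}"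
        using t1 by (auto simp: lists_n_def)
      have "prob_next N Xs Q1 Q G i t x y as
          = (\<Sum>xi\<in>{xi\<in>lists_n (Suc t) (Xs i). xi ! (t - 1) = x \<and> xi ! t = y}. Fp Q1 Q (G i) i (Suc t) xi as) * Cp G (Suc t) as"
        unfolding prob_next_def S Cp_def
        using sum_pr_x[where P="\<lambda>xi. xi ! (t - 1) = x \<and> xi ! t = y" and as=as and w="\<lambda>_. 1", OF finX i one] by simp
      also have "(\<Sum>xi\<in>{xi\<in>lists_n (Suc t) (Xs i). xi ! (t - 1) = x \<and> xi ! t = y}. Fp Q1 Q (G i) i (Suc t) xi as)
          = (\<Sum>xi\<in>{xi\<in>lists_n t (Xs i). xi ! (t - 1) = x}. Fp Q1 Q (G i) i (Suc t) (xi @ [y]) as)"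
        unfolding S2 by (rule sum_snoc_y[OF finX[OF i] y])
      also have "\<dots> = K G t x as * Q i (Suc t) x (as ! (t - 1)) y" by (rule Ksnoc[OF t1])
      finally show ?thesis .
    qed
    have Msuc: "M G (Suc t) y as = (\<Sum>x\<in>Xs i. K G t x as * Q i (Suc t) x (as ! (t - 1)) y)"
      if t1: "t \<ge> 1" and y: "y \<in> Xs i" for G t y as
    proof -
      have S2: "{xi \<in> lists_n (Suc t) (Xs i). xi ! t = y}
          = {xi \<in> lists_n (Suc t) (Xs i). (\<lambda>l. True) (take t xi) \<and> xi ! t = y}" by simp
      have "M G (Suc t) y as = (\<Sum>xi\<in>{xi\<in>lists_n t (Xs i). True}. Fp Q1 Q (G i) i (Suc t) (xi @ [y]) as)"
        unfolding M_def diff_Suc_1 S2 by (rule sum_snoc_y[OF finX[OF i] y])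
      also have "\<dots> = (\<Sum>x\<in>Xs i. \<Sum>xi\<in>{xi\<in>lists_n t (Xs i). xi ! (t - 1) = x}. Fp Q1 Q (G i) i (Suc t) (xi @ [y]) as)"
        using sum_by_last[OF finX[OF i] t1] by simp
      also have "\<dots> = (\<Sum>x\<in>Xs i. K G t x as * Q i (Suc t) x (as ! (t - 1)) y)"
        by (rule sum.cong[OF refl]) (rule Ksnoc[OF t1])
      finally show ?thesis .
    qed
    have Fnn: "Fp Q1 Q (g j) j t xj as \<ge> 0"
      if "j \<in> {1..N}" "xj \<in> lists_n t (Xs j)" "1 \<le> t" "t \<le> T + 1" "t - 1 \<le> length as" "set as \<subseteq> profiles N As"
      for j t xj as
      using Fp_nonneg[OF ker _ that] prof that(1) unfolding strategy_profile_def by blast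
    have gnn: "g j t h xj b \<ge> 0"
      if "j \<in> {1..N}" "t \<in> {1..T}" "length h = t - 1" "set h \<subseteq> profiles N As" "xj \<in> lists_n t (Xs j)" "b \<in> As j"
      for j t h xj b
      using prof that unfolding strategy_profile_def strategy_def lists_n_def by blast
    have CpSuc: "Cp g (Suc t) as = (\<Prod>j\<in>{1..N}-{i}. \<Sum>xj\<in>lists_n t (Xs j).
          Fp Q1 Q (g j) j t xj as * g j t (take (t - 1) as) xj ((as ! (t - 1)) j))"
      if t: "t \<in> {1..T}" and la: "t \<le> length as" and sa: "set as \<subseteq> profiles N As" for t as
      unfolding Cp_def
    proof (rule prod.cong[OF refl])
      fix j assume j: "j \<in> {1..N}-{i}"
      have t1: "t \<ge> 1" using t by simp
      have ap: "as ! (t - 1) \<in> profiles N As" using la sa t1 by (auto intro!: subsetD[OF sa] nth_mem)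
      have "(\<Sum>xj\<in>lists_n (Suc t) (Xs j). Fp Q1 Q (g j) j (Suc t) xj as)
          = (\<Sum>xj\<in>lists_n t (Xs j). \<Sum>z\<in>Xs j. Fp Q1 Q (g j) j (Suc t) (xj @ [z]) as)"
        using j by (intro sum_lists_snoc finX) auto
      also have "\<dots> = (\<Sum>xj\<in>lists_n t (Xs j). Fp Q1 Q (g j) j t xj as * g j t (take (t - 1) as) xj ((as ! (t - 1)) j))"
      proof (rule sum.cong[OF refl])
        fix xj assume xj: "xj \<in> lists_n t (Xs j)"
        then have l: "length xj = t" and sx: "set xj \<subseteq> Xs j" by (auto simp: lists_n_def)
        have xl: "xj ! (t - 1) \<in> Xs j" using l sx t1 by (auto intro!: subsetD[OF sx] nth_mem)
        have "(\<Sum>z\<in>Xs j. Q j (t + 1) (xj ! (t - 1)) (as ! (t - 1)) z) = 1"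
          using ker j xl ap t unfolding kernels_def by auto
        then show "(\<Sum>z\<in>Xs j. Fp Q1 Q (g j) j (Suc t) (xj @ [z]) as)
            = Fp Q1 Q (g j) j t xj as * g j t (take (t - 1) as) xj ((as ! (t - 1)) j)"
          by (simp add: Fp_snoc[OF l t1] sum_distrib_left[symmetric])
      qed
      finally show "(\<Sum>xj\<in>lists_n (Suc t) (Xs j). Fp Q1 Q (g j) j (Suc t) xj as)
          = (\<Sum>xj\<in>lists_n t (Xs j). Fp Q1 Q (g j) j t xj as * g j t (take (t - 1) as) xj ((as ! (t - 1)) j))" .
    qed
    define IH where "IH t \<longleftrightarrow> (\<forall>as. t - 1 \<le> length as \<and> set as \<subseteq> profiles N As \<longrightarrow>
        (\<forall>x\<in>Xs i. M gt t x as * Cp g t as = M g t x as * Cp g t as))" for t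
    have step: "K gt t x as * Cp g (Suc t) as = K g t x as * Cp g (Suc t) as"
      if t: "t \<in> {1..T}" and ih: "IH t" and la: "t \<le> length as" and sa: "set as \<subseteq> profiles N As"
        and x: "x \<in> Xs i" for t x as
    proof -
      have t1: "t \<ge> 1" using t by simp
      define h where "h = take (t - 1) as"
      define a where "a = (as ! (t - 1)) i"
      have ap: "as ! (t - 1) \<in> profiles N As" using la sa t1 by (auto intro!: subsetD[OF sa] nth_mem)
      then have a: "a \<in> As i" using i by (auto simp: a_def profiles_def PiE_iff)
      have hl: "length h = t - 1" using la by (simp add: h_def)
      have hs: "set h \<subseteq> profiles N As" using sa unfolding h_def by (meson set_take_subset subset_trans)
      have FT: "Fp Q1 Q gj j t xi h = Fp Q1 Q gj j t xi as" for gj j xi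
        unfolding h_def by (rule Fp_take) simp
      have la1: "t - 1 \<le> length as" using la by simp
      have tT: "t \<le> T + 1" using t by simp
      have Cnn: "Cp g t as \<ge> 0" unfolding Cp_def
        by (intro prod_nonneg ballI sum_nonneg Fnn[OF _ _ t1 tT la1 sa]) auto
      show ?thesis
      proof (cases "Cp g t as = 0")
        case True
        note T0 = True
        have "\<exists>j\<in>{1..N}-{i}. (\<Sum>xj\<in>lists_n t (Xs j). Fp Q1 Q (g j) j t xj as) = 0"
        proof -
          have "(\<Prod>j\<in>{1..N}-{i}. \<Sum>xj\<in>lists_n t (Xs j). Fp Q1 Q (g j) j t xj as) = 0"
            using True unfolding Cp_def .
          then show ?thesis by (rule iffD1[OF prod_zero_iff[OF finite_Diff[OF fin1]]])
        qed
        then obtain j where j: "j \<in> {1..N}-{i}" and s0: "(\<Sum>xj\<in>lists_n t (Xs j). Fp Q1 Q (g j) j t xj as) = 0"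
          by blast
        have jN: "j \<in> {1..N}" using j by simp
        have all0: "\<forall>xj\<in>lists_n t (Xs j). Fp Q1 Q (g j) j t xj as = 0"
        proof -
          have nn: "\<And>xj. xj \<in> lists_n t (Xs j) \<Longrightarrow> Fp Q1 Q (g j) j t xj as \<ge> 0"
            using Fnn[OF jN _ t1 tT la1 sa] by blast
          show ?thesis using iffD1[OF sum_nonneg_eq_0_iff[OF finite_lists_n[OF finX[OF jN]] nn] s0] .
        qed
        have "(\<Sum>xj\<in>lists_n t (Xs j). Fp Q1 Q (g j) j t xj as * g j t (take (t - 1) as) xj ((as ! (t - 1)) j)) = 0"
          using all0 by simp
        then have "Cp g (Suc t) as = 0"
          unfolding CpSuc[OF t la sa] by (rule prod_zero[OF finite_Diff[OF fin1] bexI[OF _ j]])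
        then show ?thesis by simp
      next
        case False
        then have Cpos: "Cp g t as > 0" using Cnn by simp
        have Meq: "M gt t x as = M g t x as" using ih la1 sa x False unfolding IH_def by auto
        have Mnn: "M g t x as \<ge> 0" unfolding M_def
          by (intro sum_nonneg Fnn[OF i _ t1 tT la1 sa]) auto
        show ?thesis
        proof (cases "M g t x as = 0")
          case True
          have all0: "\<forall>xi\<in>{xi\<in>lists_n t (Xs i). xi ! (t - 1) = x}. Fp Q1 Q (g i) i t xi as = 0"
          proof -
            have fs: "finite {xi\<in>lists_n t (Xs i). xi ! (t - 1) = x}"
              using finite_lists_n[OF finX[OF i]] by simp
            have nn: "\<And>xi. xi \<in> {xi\<in>lists_n t (Xs i). xi ! (t - 1) = x} \<Longrightarrow> Fp Q1 Q (g i) i t xi as \<ge> 0"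
              using Fnn[OF i _ t1 tT la1 sa] by blast
            have z: "(\<Sum>xi\<in>{xi\<in>lists_n t (Xs i). xi ! (t - 1) = x}. Fp Q1 Q (g i) i t xi as) = 0"
              using True unfolding M_def .
            show ?thesis using iffD1[OF sum_nonneg_eq_0_iff[OF fs nn] z] .
          qed
          have "K g t x as = 0" unfolding K_def using all0 by simp
          moreover have "K gt t x as = 0" using Kgt[OF t1] Meq True by simp
          ultimately show ?thesis by simp
        next
          case False
          have d: "cond_den N Xs Q1 Q g i t h x = M g t x as * Cp g t as"
            using den[OF t1, of g h x] unfolding M_def Cp_def FT by simp
          have dpos: "cond_den N Xs Q1 Q g i t h x > 0" using d False Mnn Cpos by simp
          have n: "cond_num N Xs As Q1 Q g i t h x a = K g t x as * Cp g t as"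
            using num[OF prof t hl hs a, of x] unfolding K_def Cp_def FT h_def[symmetric] a_def[symmetric] by simp
          have "s t h x a = cond_num N Xs As Q1 Q g i t h x a / cond_den N Xs Q1 Q g i t h x"
            using s_def t hl hs x a dpos by blast
          also have "\<dots> = (K g t x as * Cp g t as) / (M g t x as * Cp g t as)" unfolding n d ..
          also have "\<dots> = K g t x as / M g t x as" using Cpos by simp
          finally have sv: "s t h x a = K g t x as / M g t x as" .
          have "K gt t x as = K g t x as"
            using Kgt[OF t1, of x as] Meq False unfolding sv[unfolded h_def a_def] by simp
          then show ?thesis by simp
        qed
      qed
    qed
    have IHall: "t \<in> {1..T} \<longrightarrow> IH t" for t
    proof (induction t)
      case 0
      then show ?case by simp
    next
      case (Suc t)
      show ?case
      proof
        assume St: "Suc t \<in> {1..T}"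
        show "IH (Suc t)"
        proof (cases "t = 0")
          case True
          then show ?thesis by (simp add: IH_def M_def Fp_1)
        next
          case False
          then have t: "t \<in> {1..T}" and t1: "t \<ge> 1" using St by auto
          have ih: "IH t" using Suc.IH t by simp
          show ?thesis unfolding IH_def
          proof (intro allI impI ballI)
            fix as y assume A: "Suc t - 1 \<le> length as \<and> set as \<subseteq> profiles N As" and y: "y \<in> Xs i"
            then have la: "t \<le> length as" and sa: "set as \<subseteq> profiles N As" by auto
            have "M gt (Suc t) y as * Cp g (Suc t) as = (\<Sum>x\<in>Xs i. (K gt t x as * Cp g (Suc t) as) * Q i (Suc t) x (as ! (t - 1)) y)"
              unfolding Msuc[OF t1 y] sum_distrib_right by (rule sum.cong) (simp_all add: ac_simps)
            also have "\<dots> = (\<Sum>x\<in>Xs i. (K g t x as * Cp g (Suc t) as) * Q i (Suc t) x (as ! (t - 1)) y)"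
              by (rule sum.cong[OF refl]) (simp add: step[OF t ih la sa])
            also have "\<dots> = M g (Suc t) y as * Cp g (Suc t) as"
              unfolding Msuc[OF t1 y] sum_distrib_right by (rule sum.cong) (simp_all add: ac_simps)
            finally show "M gt (Suc t) y as * Cp g (Suc t) as = M g (Suc t) y as * Cp g (Suc t) as" .
          qed
        qed
      qed
    qed
    show ?thesis
    proof (intro ballI allI impI)
      fix t x y as assume t: "t \<in> {1..T}" and x: "x \<in> Xs i" and y: "y \<in> Xs i"
        and A: "length as = t \<and> set as \<subseteq> profiles N As"
      have t1: "t \<ge> 1" using t by simp
      have la: "t \<le> length as" and sa: "set as \<subseteq> profiles N As" using A by auto
      have st: "K gt t x as * Cp g (Suc t) as = K g t x as * Cp g (Suc t) as"
        using step[OF t _ la sa x] IHall[of t] t by simp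
      have "prob_next N Xs Q1 Q (g(i := lift_restricted s)) i t x y as
          = K gt t x as * Q i (Suc t) x (as ! (t - 1)) y * Cp gt (Suc t) as"
        unfolding gt_def[symmetric] by (rule pn[OF t1 y])
      also have "\<dots> = (K gt t x as * Cp g (Suc t) as) * Q i (Suc t) x (as ! (t - 1)) y"
        by (simp add: Cpgt ac_simps)
      also have "\<dots> = (K g t x as * Cp g (Suc t) as) * Q i (Suc t) x (as ! (t - 1)) y"
        by (simp add: st)
      also have "\<dots> = prob_next N Xs Q1 Q g i t x y as"
        by (simp add: pn[OF t1 y] ac_simps)
      finally show "prob_next N Xs Q1 Q (g(i := lift_restricted s)) i t x y as = prob_next N Xs Q1 Q g i t x y as" .
    qed
    qed
  qed
qed

end
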